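(* There exists an atomic Puiseux monoid $M$ such that the monoid algebra $\mathbb{Z}_2[x;M]$ is not atomic.
   Context: $\mathbb{Z}_2$ denotes the field with two elements. A Puiseux monoid is a submonoid of $(\mathbb{Q}_{\ge 0}, +)$. An atom of $M$ is a nonzero element $a$ such that $a = x+y$ with $x,y\in M$ implies $x=0$ or $y=0$; $M$ is atomic if every nonzero element is a finite sum of atoms. $\mathbb{Z}_2[x;M]$ is the ring of finitely supported functions $M \to \mathbb{Z}_2$ (written $\sum_s f(s)x^s$) with convolution product, an integral domain; it is atomic if every nonzero nonunit is a finite product of irreducible elements. *)

theory Defs
  imports Complex_Main "HOL-Library.Z2" "HOL-Library.Poly_Mapping"
begin

definition puiseux_monoid :: "rat set \<Rightarrow> bool" where
  "puiseux_monoid M \<longleftrightarrow> M \<subseteq> {q. 0 \<le> q} \<and> 0 \<in> M \<and> (\<forall>x\<in>M. \<forall>y\<in>M. x + y \<in> M)"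

definition monoid_atom :: "rat set \<Rightarrow> rat \<Rightarrow> bool" where
  "monoid_atom M a \<longleftrightarrow> a \<in> M \<and> a \<noteq> 0 \<and>
     (\<forall>x\<in>M. \<forall>y\<in>M. a = x + y \<longrightarrow> x = 0 \<or> y = 0)"

definition atomic_monoid :: "rat set \<Rightarrow> bool" where
  "atomic_monoid M \<longleftrightarrow> (\<forall>b\<in>M. b \<noteq> 0 \<longrightarrow>
     (\<exists>as. as \<noteq> [] \<and> (\<forall>a\<in>set as. monoid_atom M a) \<and> sum_list as = b))"

text \<open>The monoid algebra Z_2[x;M], realised inside the group algebra
  the type of finitely supported functions with convolution product)
  as the subring of elements supported in M.\<close>
definition monoid_algebra :: "rat set \<Rightarrow> (rat \<Rightarrow>\<^sub>0 bit) set" where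
  "monoid_algebra M = {f. Poly_Mapping.keys f \<subseteq> M}"

definition ma_unit :: "rat set \<Rightarrow> (rat \<Rightarrow>\<^sub>0 bit) \<Rightarrow> bool" where
  "ma_unit M f \<longleftrightarrow> f \<in> monoid_algebra M \<and> (\<exists>g\<in>monoid_algebra M. f * g = 1)"

definition ma_irreducible :: "rat set \<Rightarrow> (rat \<Rightarrow>\<^sub>0 bit) \<Rightarrow> bool" where
  "ma_irreducible M f \<longleftrightarrow> f \<in> monoid_algebra M \<and> f \<noteq> 0 \<and> \<not> ma_unit M f \<and>
     (\<forall>g\<in>monoid_algebra M. \<forall>h\<in>monoid_algebra M. f = g * h \<longrightarrow> ma_unit M g \<or> ma_unit M h)"

definition ma_atomic :: "rat set \<Rightarrow> bool" where
  "ma_atomic M \<longleftrightarrow> (\<forall>f\<in>monoid_algebra M. f \<noteq> 0 \<and> \<not> ma_unit M f \<longrightarrow>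
     (\<exists>fs. fs \<noteq> [] \<and> (\<forall>g\<in>set fs. ma_irreducible M g) \<and> prod_list fs = f))"

end

theory Submission
  imports Defs "Berlekamp_Zassenhaus.Distinct_Degree_Factorization" "HOL-Number_Theory.Cong"
begin

lemma four_pow_mod9: "(4::int)^m mod 9 = 4^(m mod 3) mod 9"
proof -
  define q where "q = m div 3"
  define r where "r = m mod 3"
  have e: "m = 3 * q + r" by (simp add: q_def r_def)
  have "(4::int)^m = 64^q * 4^r" unfolding e by (simp add: power_add power_mult)
  hence "(4::int)^m = 64^(m div 3) * 4^(m mod 3)" by (simp add: q_def r_def)
  moreover have "[(64::int)^(m div 3) = 1^(m div 3)] (mod 9)"
    by (rule cong_pow) (simp add: cong_def)
  ultimately have "[(4::int)^m = 1 * 4^(m mod 3)] (mod 9)"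
    by (metis cong_scalar_right power_one)
  thus ?thesis by (simp add: cong_def)
qed

lemma three_dvd_of_nine: assumes "(9::int) dvd 4^m - 1" shows "3 dvd m"
proof (rule ccontr)
  assume "\<not> 3 dvd m"
  hence "m mod 3 = 1 \<or> m mod 3 = 2" by presburger
  hence "(4::int)^m mod 9 = 4 \<or> (4::int)^m mod 9 = 7" using four_pow_mod9[of m] by auto
  moreover have "[(4::int)^m = 1] (mod 9)" using assms by (simp add: cong_iff_dvd_diff)
  hence "(4::int)^m mod 9 = 1" by (simp add: cong_def)
  ultimately show False by auto
qed

lemma p3int: "prime (3::int)" by (simp add: prime_int_numeral_eq prime_nat_numeral_eq)
lemma nd31: "\<not> (3::int) dvd 3 * u + 1" by presburger

lemma lte4: "(3::int)^(Suc b) dvd 4^m - 1 \<Longrightarrow> 3^b dvd m"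
proof (induction b arbitrary: m)
  case 0 then show ?case by simp
next
  case (Suc b)
  have "(9::int) dvd 3^(Suc (Suc b))" by (simp add: dvd_def) 
  hence "(9::int) dvd 4^m - 1" using Suc.prems dvd_trans by blast
  then obtain q where q: "m = 3 * q" using three_dvd_of_nine by blast
  define t where "t = (4::int)^q"
  have "[(4::int)^q = 1^q] (mod 3)" by (rule cong_pow) (simp add: cong_def)
  hence "[t = 1] (mod 3)" unfolding t_def by simp
  then obtain s where s: "t = 3 * s + 1"
    by (metis cong_def cong_iff_lin mod_mod_trivial add.commute mult.commute cong_sym)
  have "4^m - 1 = (t - 1) * (3 * (3*s^2 + 3*s + 1))"
    unfolding q t_def[symmetric] power_mult[symmetric] 
    by (simp add: power_mult t_def[symmetric] s algebra_simps power2_eq_square power3_eq_cube)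
  with Suc.prems have "3 * 3^(Suc b) dvd 3 * ((t - 1) * (3*s^2 + 3*s + 1))"
    by (simp add: algebra_simps)
  hence d: "3^(Suc b) dvd (t - 1) * (3*s^2 + 3*s + 1)"
    using dvd_mult_cancel_left[of 3 "3^(Suc b)" "(t - 1) * (3*s^2 + 3*s + 1)"] by simp
  have "algebraic_semidom_class.coprime ((3::int)^(Suc b)) (3*s^2 + 3*s + 1)"
  proof -
    have e: "3*s^2 + 3*s + 1 = 3 * (s^2 + s) + (1::int)" by (simp add: algebra_simps)
    have "algebraic_semidom_class.coprime (3::int) (3 * (s^2 + s) + 1)" by (rule prime_imp_coprime[OF p3int nd31])
    hence "algebraic_semidom_class.coprime (3::int) (3*s^2 + 3*s + 1)" unfolding e .
    thus ?thesis by simp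
  qed
  hence "3^(Suc b) dvd t - 1" using d coprime_dvd_mult_left_iff by blast
  hence "3^b dvd q" using Suc.IH unfolding t_def by blast
  thus ?case using q by simp
qed

lemma ord2: assumes "(3::nat)^(Suc b) dvd 2^d - 1" shows "2 * 3^b dvd d"
proof -
  have i0: "int (3^(Suc b)) dvd int (2^d - 1)" using assms by (simp only: int_dvd_int_iff)
  have "int (2^d - 1) = 2^d - 1" using one_le_power[of "2::nat" d] by (simp add: of_nat_diff)
  hence i: "(3::int)^(Suc b) dvd 2^d - 1" using i0 by simp
  hence "(3::int) dvd 2^d - 1" by (meson dvd_trans dvd_power le_add2 plus_1_eq_Suc zero_less_Suc dvd_refl)
  have ev: "even d"
  proof (rule ccontr)
    assume "odd d"
    then obtain m where m: "d = 2*m+1" using oddE by blast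
    have "[(4::int)^m = 1^m] (mod 3)" by (rule cong_pow) (simp add: cong_def)
    hence "[2 * (4::int)^m = 2 * 1^m] (mod 3)" by (rule cong_scalar_left)
    moreover have "(2::int)^d = 2 * 4^m" unfolding m by (simp add: power_add power_mult)
    ultimately have "[(2::int)^d = 2] (mod 3)" by simp
    hence "[(2::int)^d - 1 = 2 - 1] (mod 3)" by (rule cong_diff) (rule cong_refl)
    hence "[(2::int)^d - 1 = 1] (mod 3)" by simp
    with \<open>(3::int) dvd 2^d - 1\<close> show False by (simp add: cong_def)
  qed
  then obtain m where m: "d = 2*m" by blast
  have "(2::int)^d = 4^m" unfolding m by (simp add: power_mult)
  hence "3^b dvd m" using lte4 i by simp
  thus ?thesis using m by simp
qed

type_synonym K = "bool mod_ring"

lemma K_one_one: "(1::K) + 1 = 0"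
proof -
  have "(of_nat CARD(bool) :: K) = 0" by (rule of_nat_card_eq_0)
  thus ?thesis by simp
qed

lemma K_two: "(2::K) = 0"
proof -
  have "(2::K) = 1 + 1" by simp
  thus ?thesis using K_one_one by simp
qed

lemma Kpoly_two: "(2::K poly) = 0"
proof (rule poly_eqI)
  fix n
  have "coeff (2::K poly) n = coeff (1 + 1 :: K poly) n" by simp
  also have "\<dots> = coeff 1 n + coeff 1 n" by (rule coeff_add)
  also have "\<dots> = 0" by (cases "n = 0") (simp_all add: coeff_1 K_two)
  finally show "coeff (2::K poly) n = coeff 0 n" by simp
qed

lemma Kpoly_dbl: "(x::K poly) + x = 0"
  by (metis Kpoly_two mult_2 mult_zero_left)

definition Xp :: "K poly" where "Xp = monom 1 1"

definition Phi :: "nat \<Rightarrow> K poly" where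
  "Phi b = 1 + Xp^(3^b) + Xp^(2*3^b)"

lemma Xp_pow: "Xp^n = monom 1 n" unfolding Xp_def by (simp add: monom_power)

lemma Phi_mult: "Phi b * (Xp^(3^b) - 1) = Xp^(3^(Suc b)) - 1"
proof -
  have "Phi b * (Xp^(3^b) - 1) = (Xp^(3^b))^3 - 1"
    unfolding Phi_def by (simp add: algebra_simps power_mult[symmetric] power3_eq_cube power2_eq_square mult_2 power_add)
  thus ?thesis by (simp add: power_mult[symmetric] mult.commute)
qed

lemma Phi_dvd: "Phi b dvd Xp^(3^(Suc b)) - 1"
  using Phi_mult by (metis dvd_triv_left)

lemma degree_Phi: "degree (Phi b) = 2 * 3^b"
proof -
  have "Phi b = monom 1 (2*3^b) + (monom 1 (3^b) + 1)" unfolding Phi_def Xp_pow by (simp add: algebra_simps)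
  moreover have "degree (monom (1::K) (3^b) + 1) < 2 * 3^b"
  proof -
    have "degree (monom (1::K) (3^b) + 1) \<le> max (degree (monom (1::K) (3^b))) (degree (1::K poly))"
      by (rule degree_add_le_max)
    also have "\<dots> = 3^b" by (simp add: degree_monom_eq)
    finally have "degree (monom (1::K) (3^b) + 1) \<le> 3^b" .
    moreover have "(3::nat)^b < 2 * 3^b" by simp
    ultimately show ?thesis by linarith
  qed
  ultimately show ?thesis by (simp add: degree_add_eq_left degree_monom_eq)
qed

lemma Phi_nonzero: "Phi b \<noteq> 0" using degree_Phi[of b] by (metis degree_0 mult_is_0 zero_neq_numeral power_not_zero)

lemma prime3: "prime (3::nat)" by (simp add: prime_nat_numeral_eq)

lemma cong_pow_gcd:
  fixes x m :: "K poly"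
  assumes "[x^E = 1] (mod m)" "[x^F = 1] (mod m)" "F \<noteq> 0"
  shows "[x^(gcd E F) = 1] (mod m)"
proof -
  obtain u v where uv: "F * u = E * v + gcd F E" using bezout_nat[OF assms(3)] by blast
  have a: "[x^(F*u) = 1] (mod m)" using cong_pow[OF assms(2), of u] by (simp add: power_mult)
  have b: "[x^(E*v) = 1] (mod m)" using cong_pow[OF assms(1), of v] by (simp add: power_mult)
  have "x^(F*u) = x^(E*v) * x^(gcd F E)" using uv by (simp add: power_add)
  hence "[x^(E*v) * x^(gcd F E) = 1] (mod m)" using a by simp
  moreover have "[x^(E*v) * x^(gcd F E) = 1 * x^(gcd F E)] (mod m)" using b by (rule cong_scalar_right)
  ultimately have "[x^(gcd F E) = 1] (mod m)" by (metis cong_sym cong_trans mult_1)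
  thus ?thesis by (simp add: gcd.commute)
qed

lemma irr_factor_degree:
  assumes irr: "irreducible \<psi>" and dv: "\<psi> dvd Phi b"
  shows "2 * 3^b \<le> degree \<psi>"
proof -
  define d where "d = degree \<psi>"
  have dpos: "d > 0" unfolding d_def using irr
    by (metis irreducible_def is_unit_iff_degree neq0_conv)
  have "\<psi> dvd monom 1 1 ^ (CARD(bool) ^ d) - monom 1 1"
    using degree_divisor1[OF irr] d_def by simp
  hence c1: "[Xp^(2^d) = Xp] (mod \<psi>)" unfolding Xp_def by (simp add: cong_iff_dvd_diff)
  define F :: nat where "F = 3^(Suc b)"
  have c2: "[Xp^F = 1] (mod \<psi>)" unfolding F_def using dvd_trans[OF dv Phi_dvd] by (simp add: cong_iff_dvd_diff)
  have Fpos: "F > 0" unfolding F_def by simp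
  have c3: "[Xp^(2^d - 1) = 1] (mod \<psi>)"
  proof -
    have s1: "Suc (2^d - 1) = (2::nat)^d" by simp
    have s2: "Suc (F - 1) = F" using Fpos by simp
    have p1: "Xp^(2^d) = Xp * Xp^(2^d - 1)" using power_Suc[of Xp "2^d - 1"] unfolding s1 .
    have p2: "Xp^F = Xp * Xp^(F - 1)" using power_Suc[of Xp "F - 1"] unfolding s2 .
    have "[Xp^(2^d - 1) * 1 = Xp^(2^d - 1) * Xp^F] (mod \<psi>)"
      using cong_scalar_left[OF c2, of "Xp^(2^d - 1)"] by (rule cong_sym)
    hence "[Xp^(2^d - 1) = Xp^(2^d - 1) * Xp^F] (mod \<psi>)" by simp
    also have "Xp^(2^d - 1) * Xp^F = Xp^(2^d) * Xp^(F - 1)"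
      unfolding p1 p2 by (simp add: ac_simps)
    also have "[Xp^(2^d) * Xp^(F - 1) = Xp * Xp^(F - 1)] (mod \<psi>)" using c1 by (rule cong_scalar_right)
    also have "Xp * Xp^(F - 1) = Xp^F" using p2 by simp
    also have "[Xp^F = 1] (mod \<psi>)" by (rule c2)
    finally show ?thesis .
  qed
  have "(3::nat)^(Suc b) dvd 2^d - 1"
  proof (rule ccontr)
    assume nd: "\<not> (3::nat)^(Suc b) dvd 2^d - 1"
    have g: "[Xp^(gcd (2^d - 1) F) = 1] (mod \<psi>)" using cong_pow_gcd[OF c3 c2] Fpos by simp
    have "gcd (2^d - 1) F dvd F" by simp
    then obtain i where i: "i \<le> Suc b" "gcd (2^d - 1) F = 3^i" unfolding F_def
      using divides_primepow_nat[of 3] prime3 by blast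
    have "i \<noteq> Suc b" using i nd unfolding F_def by (metis gcd_dvd1)
    hence "3^i dvd (3::nat)^b" using i by (simp add: le_imp_power_dvd)
    then obtain k :: nat where k: "3^b = 3^i * k" by (auto simp: dvd_def)
    have "[(Xp^(3^i))^k = 1^k] (mod \<psi>)" using g unfolding i(2) by (rule cong_pow)
    hence x3: "[Xp^(3^b) = 1] (mod \<psi>)" unfolding k by (simp add: power_mult)
    have e2: "Xp^(2*3^b) = (Xp^(3^b))^2" by (simp add: power_mult[symmetric] mult.commute)
    have "[1 + Xp^(3^b) + (Xp^(3^b))^2 = 1 + 1 + 1^2] (mod \<psi>)"
      by (intro cong_add cong_refl x3 cong_pow)
    hence "[Phi b = 1 + 1 + 1] (mod \<psi>)" unfolding Phi_def e2 by simp
    moreover have "(1::K poly) + 1 + 1 = 1" by (simp add: Kpoly_dbl)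
    ultimately have "[Phi b = 1] (mod \<psi>)" by simp
    moreover have "[Phi b = 0] (mod \<psi>)" using dv by (simp add: cong_0_iff)
    ultimately have "[1 = 0] (mod \<psi>)" by (metis cong_sym cong_trans)
    hence "\<psi> dvd 1" by (simp add: cong_0_iff cong_sym_eq)
    thus False using irr by (simp add: irreducible_def)
  qed
  hence "2 * 3^b dvd d" by (rule ord2)
  thus ?thesis unfolding d_def using dpos d_def by (simp add: dvd_imp_le)
qed

lemma irr_Phi: "irreducible (Phi b)"
proof (rule irreducibleI)
  show "Phi b \<noteq> 0" by (rule Phi_nonzero)
  show "\<not> is_unit (Phi b)" using degree_Phi[of b] by (simp add: is_unit_iff_degree Phi_nonzero)
  fix a c assume ac: "Phi b = a * c"
  show "is_unit a \<or> is_unit c"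
  proof (rule ccontr)
    assume nu: "\<not> (is_unit a \<or> is_unit c)"
    have a0: "a \<noteq> 0" and c0: "c \<noteq> 0" using ac Phi_nonzero by auto
    have dc: "degree c > 0" using nu c0 by (simp add: is_unit_iff_degree)
    obtain p where p: "prime p" "p dvd a" using prime_divisor_exists[OF a0] nu by blast
    have "irreducible p" using p(1) by (intro prime_elem_imp_irreducible prime_imp_prime_elem)
    moreover have "p dvd Phi b" using p(2) ac by simp
    ultimately have "2 * 3^b \<le> degree p" by (rule irr_factor_degree)
    moreover have "degree p \<le> degree a" using p(2) a0 by (rule dvd_imp_degree_le)
    moreover have "degree (Phi b) = degree a + degree c" using ac a0 c0 by (simp add: degree_mult_eq)
    ultimately show False using degree_Phi[of b] dc by simp
  qed
qed

definition msupp :: "nat \<Rightarrow> K poly \<Rightarrow> bool" where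
  "msupp m p \<longleftrightarrow> (\<forall>j. \<not> m dvd j \<longrightarrow> coeff p j = 0)"

lemma msupp_add: "msupp m p \<Longrightarrow> msupp m q \<Longrightarrow> msupp m (p + q)"
  by (simp add: msupp_def)

lemma msupp_mult: assumes "msupp m p" "msupp m q" shows "msupp m (p * q)"
  unfolding msupp_def
proof (intro allI impI)
  fix j assume nj: "\<not> m dvd j"
  have "coeff (p * q) j = (\<Sum>i\<le>j. coeff p i * coeff q (j - i))" by (rule coeff_mult)
  also have "\<dots> = 0"
  proof (rule sum.neutral, rule ballI)
    fix i assume "i \<in> {..j}"
    hence "i \<le> j" by simp
    show "coeff p i * coeff q (j - i) = 0"
    proof (cases "m dvd i")
      case True
      hence "\<not> m dvd (j - i)" using nj \<open>i \<le> j\<close> by (metis dvd_add le_add_diff_inverse)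
      thus ?thesis using assms(2) by (simp add: msupp_def)
    next
      case False thus ?thesis using assms(1) by (simp add: msupp_def)
    qed
  qed
  finally show "coeff (p * q) j = 0" .
qed

lemma msupp_one: "msupp m 1" unfolding msupp_def
proof (intro allI impI)
  fix j assume "\<not> m dvd j"
  hence "j \<noteq> 0" using dvd_0_right[of m] by metis
  thus "coeff 1 j = 0" by (simp add: coeff_1)
qed

lemma msupp_const: "msupp m [:c:]" unfolding msupp_def
proof (intro allI impI)
  fix j assume "\<not> m dvd j"
  hence "j \<noteq> 0" using dvd_0_right[of m] by metis
  thus "coeff [:c:] j = 0" by (cases j) auto
qed

lemma msupp_pow: "msupp m p \<Longrightarrow> msupp m (p ^ n)"
  by (induction n) (auto simp: msupp_one msupp_mult)

lemma msupp_Xpow: "m dvd k \<Longrightarrow> msupp m (Xp^k)"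
  by (auto simp: msupp_def Xp_pow coeff_monom)

lemma msupp_Phi: "msupp (3^b) (Phi b)"
  unfolding Phi_def by (intro msupp_add msupp_one msupp_Xpow) auto

lemma msupp_smult: "msupp m p \<Longrightarrow> msupp m (smult c p)"
  by (simp add: msupp_def)

lemma dvd_Phi_pow: assumes "G dvd (Phi b)^n" shows "msupp (3^b) G"
proof -
  have "monic (Phi b)"
  proof -
    have "Phi b = monom 1 (2*3^b) + (monom 1 (3^b) + 1)" unfolding Phi_def Xp_pow by (simp add: algebra_simps)
    moreover have "coeff (monom (1::K) (3^b) + 1) (2*3^b) = 0" by (simp add: coeff_monom coeff_1)
    ultimately show ?thesis using degree_Phi[of b] by (simp add: coeff_monom)
  qed
  hence nP: "normalize (Phi b) = Phi b" by (simp add: normalize_monic)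
  have "prime_elem (Phi b)" using irr_Phi[of b] by (rule irreducible_imp_prime_elem)
  hence pr: "prime (Phi b)" using nP by (rule normalization_semidom_class.primeI)
  obtain m where m: "m \<le> n" "normalize G = (Phi b)^m" using divides_primepow[OF pr assms] by blast
  have "msupp (3^b) (normalize G)" unfolding m(2) by (intro msupp_pow msupp_Phi)
  moreover have "msupp (3^b) (unit_factor G)" unfolding unit_factor_poly_def by (rule msupp_const)
  ultimately have "msupp (3^b) (unit_factor G * normalize G)" by (intro msupp_mult)
  thus ?thesis by simp
qed

lemma frob_sq: "(1 + (y::K poly) + y^2)^2 = 1 + y^2 + (y^2)^2"
proof -
  have "(1 + y + y^2)^2 = 1 + y^2 + (y^2)^2 + (y + y) * (1 + y + y^2) + (y + y) * y^2 - (y+y)*y^2 "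
    by (simp add: algebra_simps power2_eq_square)
  thus ?thesis by (simp add: Kpoly_dbl)
qed

lemma Phi_pow2: "(Phi b)^(2^a) = 1 + Xp^(2^a * 3^b) + Xp^(2 * (2^a * 3^b))"
proof (induction a)
  case 0 then show ?case by (simp add: Phi_def)
next
  case (Suc a)
  have "(Phi b)^(2^(Suc a)) = ((Phi b)^(2^a))^2" by (simp add: power_mult[symmetric] mult.commute)
  also have "\<dots> = (1 + Xp^(2^a * 3^b) + (Xp^(2^a * 3^b))^2)^2" unfolding Suc.IH by (simp add: power_mult[symmetric] mult.commute)
  also have "\<dots> = 1 + (Xp^(2^a * 3^b))^2 + ((Xp^(2^a * 3^b))^2)^2" by (rule frob_sq)
  also have "\<dots> = 1 + Xp^(2^(Suc a) * 3^b) + Xp^(2 * (2^(Suc a) * 3^b))"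
    by (simp add: power_mult[symmetric] algebra_simps)
  finally show ?case .
qed

definition kb :: "bit \<Rightarrow> K" where "kb c = (if c = 0 then 0 else 1)"

lemma kb_0[simp]: "kb 0 = 0" and kb_1[simp]: "kb 1 = 1" by (simp_all add: kb_def)

lemma bit_cases2: "(c::bit) = 0 \<or> c = 1"
  by (metis bit_not_zero_iff)

lemma kb_add: "kb (a + b) = kb a + kb b"
  using bit_cases2[of a] bit_cases2[of b] by (auto simp: kb_def K_one_one K_two)

lemma kb_mult: "kb (a * b) = kb a * kb b"
  using bit_cases2[of a] bit_cases2[of b] by (auto simp: kb_def)

lemma kb_eq_0: "kb c = 0 \<longleftrightarrow> c = 0" by (simp add: kb_def)

definition iota :: "nat \<Rightarrow> rat \<Rightarrow> nat" where "iota N s = nat \<lfloor>s * of_nat N\<rfloor>"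

definition conv :: "nat \<Rightarrow> (rat \<Rightarrow>\<^sub>0 bit) \<Rightarrow> K poly" where
  "conv N f = (\<Sum>s\<in>Poly_Mapping.keys f. monom (kb (Poly_Mapping.lookup f s)) (iota N s))"

lemma conv_superset:
  assumes "finite S" "Poly_Mapping.keys f \<subseteq> S"
  shows "conv N f = (\<Sum>s\<in>S. monom (kb (Poly_Mapping.lookup f s)) (iota N s))"
  unfolding conv_def
  by (rule sum.mono_neutral_left[OF assms(1) assms(2)]) (auto simp: in_keys_iff)

lemma conv_add: "conv N (f + g) = conv N f + conv N g"
proof -
  let ?S = "Poly_Mapping.keys f \<union> Poly_Mapping.keys g"
  have "conv N (f + g) = (\<Sum>s\<in>?S. monom (kb (Poly_Mapping.lookup (f+g) s)) (iota N s))"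
    by (rule conv_superset) (auto simp: keys_add)
  also have "\<dots> = (\<Sum>s\<in>?S. monom (kb (Poly_Mapping.lookup f s)) (iota N s)) + (\<Sum>s\<in>?S. monom (kb (Poly_Mapping.lookup g s)) (iota N s))"
    by (simp only: lookup_add kb_add add_monom[symmetric] sum.distrib)
  also have "\<dots> = conv N f + conv N g"
    by (simp add: conv_superset[symmetric])
  finally show ?thesis .
qed

lemma conv_0[simp]: "conv N 0 = 0" by (simp add: conv_def)

lemma conv_sum: "conv N (\<Sum>i\<in>A. F i) = (\<Sum>i\<in>A. conv N (F i))"
  by (induction A rule: infinite_finite_induct) (auto simp: conv_add)

lemma conv_single: "conv N (Poly_Mapping.single s c) = monom (kb c) (iota N s)"
  by (cases "c = 0") (simp_all add: conv_def)

lemma pm_expand: "f = (\<Sum>s\<in>Poly_Mapping.keys f. Poly_Mapping.single s (Poly_Mapping.lookup f s))"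
proof (rule poly_mapping_eqI)
  fix k
  have "Poly_Mapping.lookup (\<Sum>s\<in>Poly_Mapping.keys f. Poly_Mapping.single s (Poly_Mapping.lookup f s)) k = (\<Sum>s\<in>Poly_Mapping.keys f. Poly_Mapping.lookup (Poly_Mapping.single s (Poly_Mapping.lookup f s)) k)"
    by (rule lookup_sum)
  also have "\<dots> = (\<Sum>s\<in>Poly_Mapping.keys f. if s = k then Poly_Mapping.lookup f s else 0)"
    by (rule sum.cong) (auto simp: lookup_single when_def)
  also have "\<dots> = Poly_Mapping.lookup f k"
    by (simp add: in_keys_iff) 
  finally show "Poly_Mapping.lookup f k = Poly_Mapping.lookup (\<Sum>s\<in>Poly_Mapping.keys f. Poly_Mapping.single s (Poly_Mapping.lookup f s)) k" by simp
qed

definition grid :: "nat \<Rightarrow> rat set" where "grid N = {s. \<exists>n::nat. s = of_nat n / of_nat N}"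

lemma iota_grid: "N > 0 \<Longrightarrow> s = of_nat n / of_nat N \<Longrightarrow> iota N s = n"
  by (simp add: iota_def)

lemma iota_add: assumes "N > 0" "s \<in> grid N" "t \<in> grid N" shows "iota N (s + t) = iota N s + iota N t"
proof -
  obtain n m where "s = of_nat n / of_nat N" "t = of_nat m / of_nat N" using assms by (auto simp: grid_def)
  moreover hence "s + t = of_nat (n + m) / of_nat N" by (simp add: add_divide_distrib)
  ultimately show ?thesis using assms(1) by (simp add: iota_grid)
qed

lemma conv_mult:
  assumes N: "N > 0" and f: "Poly_Mapping.keys f \<subseteq> grid N" and g: "Poly_Mapping.keys g \<subseteq> grid N"
  shows "conv N (f * g) = conv N f * conv N g"
proof -
  have "f * g = (\<Sum>s\<in>Poly_Mapping.keys f. Poly_Mapping.single s (Poly_Mapping.lookup f s)) * (\<Sum>t\<in>Poly_Mapping.keys g. Poly_Mapping.single t (Poly_Mapping.lookup g t))"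
    using pm_expand[of f] pm_expand[of g] by simp
  also have "\<dots> = (\<Sum>s\<in>Poly_Mapping.keys f. \<Sum>t\<in>Poly_Mapping.keys g. Poly_Mapping.single (s + t) (Poly_Mapping.lookup f s * Poly_Mapping.lookup g t))"
    by (simp add: sum_product mult_single)
  finally have fg: "f * g = \<dots>" .
  have "conv N (f * g) = (\<Sum>s\<in>Poly_Mapping.keys f. \<Sum>t\<in>Poly_Mapping.keys g. monom (kb (Poly_Mapping.lookup f s * Poly_Mapping.lookup g t)) (iota N (s + t)))"
    unfolding fg by (simp add: conv_sum conv_single)
  also have "\<dots> = (\<Sum>s\<in>Poly_Mapping.keys f. \<Sum>t\<in>Poly_Mapping.keys g. monom (kb (Poly_Mapping.lookup f s)) (iota N s) * monom (kb (Poly_Mapping.lookup g t)) (iota N t))"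
  proof (intro sum.cong refl)
    fix s t assume s: "s \<in> Poly_Mapping.keys f" and t: "t \<in> Poly_Mapping.keys g"
    have "iota N (s + t) = iota N s + iota N t" using iota_add[OF N] s t f g by blast
    thus "monom (kb (Poly_Mapping.lookup f s * Poly_Mapping.lookup g t)) (iota N (s + t)) =
          monom (kb (Poly_Mapping.lookup f s)) (iota N s) * monom (kb (Poly_Mapping.lookup g t)) (iota N t)"
      by (simp add: kb_mult mult_monom)
  qed
  also have "\<dots> = conv N f * conv N g"
    by (simp add: conv_def sum_product)
  finally show ?thesis .
qed

lemma coeff_conv:
  assumes N: "N > 0" and f: "Poly_Mapping.keys f \<subseteq> grid N" and s: "s = of_nat n / of_nat N"
  shows "coeff (conv N f) n = kb (Poly_Mapping.lookup f s)"
proof -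
  have "coeff (conv N f) n = (\<Sum>t\<in>Poly_Mapping.keys f. if iota N t = n then kb (Poly_Mapping.lookup f t) else 0)"
    by (simp add: conv_def coeff_sum coeff_monom)
  also have "\<dots> = (\<Sum>t\<in>Poly_Mapping.keys f. if t = s then kb (Poly_Mapping.lookup f t) else 0)"
  proof (rule sum.cong[OF refl])
    fix t assume "t \<in> Poly_Mapping.keys f"
    then obtain m where m: "t = of_nat m / of_nat N" using f by (auto simp: grid_def)
    have "iota N t = m" using iota_grid[OF N m] .
    moreover have "(m = n) \<longleftrightarrow> (t = s)" using N m s by (auto simp: divide_cancel_right)
    ultimately show "(if iota N t = n then kb (Poly_Mapping.lookup f t) else 0) = (if t = s then kb (Poly_Mapping.lookup f t) else 0)" by simp
  qed
  also have "\<dots> = kb (Poly_Mapping.lookup f s)" by (simp add: in_keys_iff)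
  finally show ?thesis .
qed

definition T :: "rat \<Rightarrow>\<^sub>0 bit" where
  "T = Poly_Mapping.single 0 1 + Poly_Mapping.single 1 1 + Poly_Mapping.single 2 1"

lemma iota_nat: "iota N (of_nat k) = k * N"
  unfolding iota_def by (metis floor_of_nat nat_int of_nat_mult)

lemma conv_one: "conv N 1 = 1"
proof -
  have "(1::rat \<Rightarrow>\<^sub>0 bit) = Poly_Mapping.single 0 1" by simp
  hence "conv N 1 = monom (kb 1) (iota N 0)" by (metis conv_single)
  thus ?thesis by (simp add: iota_def monom_0 pCons_one)
qed

lemma conv_T: assumes "N > 0" shows "conv N T = 1 + Xp^N + Xp^(2*N)"
proof -
  have "iota N 0 = 0" "iota N 1 = N" "iota N 2 = 2*N"
    using iota_nat[of N 0] iota_nat[of N 1] iota_nat[of N 2] by simp_all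
  thus ?thesis unfolding T_def by (simp add: conv_add conv_single conv_one Xp_pow monom_0 pCons_one)
qed

primrec Hs :: "(nat \<Rightarrow> int) \<Rightarrow> nat \<Rightarrow> int" where
  "Hs d 0 = 0"
| "Hs d (Suc m) = 3 * Hs d m + d (Suc m)"

primrec Ws :: "(nat \<Rightarrow> int) \<Rightarrow> nat \<Rightarrow> rat" where
  "Ws d 0 = 0"
| "Ws d (Suc m) = Ws d m + of_int \<bar>d (Suc m)\<bar> / 2^(Suc m)"

lemma Hs_upd_less: "j < m \<Longrightarrow> Hs (d(m := v)) j = Hs d j"
  by (induction j) auto

lemma Ws_upd_less: "j < m \<Longrightarrow> Ws (d(m := v)) j = Ws d j"
  by (induction j) auto

lemma Hs_upd: "m \<ge> 1 \<Longrightarrow> Hs (d(m := v)) m = Hs d m - d m + v"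
  by (cases m) (auto simp: Hs_upd_less)

lemma Ws_upd: "m \<ge> 1 \<Longrightarrow> Ws (d(m := v)) m = Ws d m - of_int \<bar>d m\<bar> / 2^m + of_int \<bar>v\<bar> / 2^m"
  by (cases m) (auto simp: Ws_upd_less)

lemma cost_main:
  fixes t :: int
  assumes "\<not> 3^n dvd t"
  shows "m \<ge> 1 \<Longrightarrow> 3^(n+m) dvd Hs d m - t * 3^m \<Longrightarrow> Ws d m \<ge> 3/2"
proof (induction m arbitrary: d rule: nat_induct_at_least)
  case base
  have "3^(n+1) dvd d 1 - 3 * t" using base by (simp add: mult.commute)
  then obtain j where j: "d 1 - 3 * t = 3^(n+1) * j" by blast
  hence d1: "d 1 = 3 * (t + 3^n * j)" by (simp add: algebra_simps)
  have "t + 3^n * j \<noteq> 0" using assms by (metis add.commute add_diff_cancel_left' diff_0 dvd_minus_iff dvd_triv_left)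
  hence "\<bar>t + 3^n * j\<bar> \<ge> 1" by linarith
  hence "\<bar>d 1\<bar> \<ge> 3" unfolding d1 by (simp add: abs_mult)
  hence "(of_int \<bar>d 1\<bar> :: rat) \<ge> 3" by simp
  thus ?case by simp
next
  case (Suc m)
  have dv: "3^(n + Suc m) dvd 3 * Hs d m + d (Suc m) - t * 3^(Suc m)" using Suc.prems by simp
  have "3 dvd (3::int)^(n + Suc m)" by simp
  hence "3 dvd 3 * Hs d m + d (Suc m) - t * 3^(Suc m)" using dv dvd_trans by blast
  moreover have "3 dvd 3 * Hs d m - t * 3^(Suc m)" by simp
  ultimately have "3 dvd (3 * Hs d m + d (Suc m) - t * 3^(Suc m)) - (3 * Hs d m - t * 3^(Suc m))" by (rule dvd_diff)
  hence "3 dvd d (Suc m)" by simp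
  then obtain c where c: "d (Suc m) = 3 * c" by blast
  define d' where "d' = d(m := d m + c)"
  have "Hs d' m = Hs d m + c" unfolding d'_def using Hs_upd[OF Suc.hyps] by simp
  hence "3 * Hs d m + d (Suc m) - t * 3^(Suc m) = 3 * (Hs d' m - t * 3^m)" using c by (simp add: algebra_simps)
  with dv have "3 * 3^(n + m) dvd 3 * (Hs d' m - t * 3^m)" by (simp only: power_Suc add_Suc_right)
  hence "3^(n+m) dvd Hs d' m - t * 3^m" by (metis dvd_mult_cancel_left zero_neq_numeral)
  hence ih: "Ws d' m \<ge> 3/2" using Suc.IH by blast
  have "Ws d' m = Ws d m - of_int \<bar>d m\<bar> / 2^m + of_int \<bar>d m + c\<bar> / 2^m" unfolding d'_def using Ws_upd[OF Suc.hyps] by simp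
  also have "\<dots> \<le> Ws d m + of_int \<bar>c\<bar> / 2^m"
  proof -
    have "(of_int \<bar>d m + c\<bar> :: rat) \<le> of_int \<bar>d m\<bar> + of_int \<bar>c\<bar>" by simp
    hence "(of_int \<bar>d m + c\<bar> :: rat) / 2^m \<le> of_int \<bar>d m\<bar> / 2^m + of_int \<bar>c\<bar> / 2^m"
      by (simp add: add_divide_distrib[symmetric] divide_right_mono)
    thus ?thesis by simp
  qed
  also have "\<dots> \<le> Ws d (Suc m)"
  proof -
    have "(of_int \<bar>d (Suc m)\<bar> :: rat) / 2^(Suc m) = 3 * of_int \<bar>c\<bar> / (2 * 2^m)" using c by (simp add: abs_mult)
    also have "\<dots> \<ge> of_int \<bar>c\<bar> / 2^m" by (simp add: field_simps)
    finally show ?thesis by simp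
  qed
  finally show ?case using ih by simp
qed

definition Z6 :: "rat set" where "Z6 = {s. \<exists>(n::nat) (a::nat) (b::nat). s = of_nat n / (2^a * 3^b)}"
definition Dy :: "rat set" where "Dy = {s. \<exists>(n::nat) (a::nat). s = of_nat n / 2^a}"

definition sg :: "bool \<Rightarrow> int" where "sg b = (if b then 1 else -1)"

definition ee :: "nat \<Rightarrow> rat" where
  "ee k = of_nat (2^(k+4) mod 3^k) / (3^k * 2^(k+4))"

definition gen :: "nat \<times> bool \<Rightarrow> rat" where
  "gen z = 1 / 2^(fst z + 1) + of_int (sg (snd z)) * ee (fst z)"

definition dy :: "rat \<Rightarrow> bool" where "dy q \<longleftrightarrow> (\<exists>(z::int) (j::nat). q = of_int z / 2^j)"

lemma ee_nonneg: "ee k \<ge> 0" by (simp add: ee_def)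

lemma ee_less: "ee k < 1 / 2^(k+4)"
proof -
  have "2^(k+4) mod 3^k < (3::nat)^k" by simp
  hence "(of_nat (2^(k+4) mod 3^k) :: rat) < 3^k" by (metis of_nat_less_iff of_nat_numeral of_nat_power)
  thus ?thesis unfolding ee_def by (simp add: field_simps)
qed

lemma gen_lower: "gen (k, b) \<ge> 7 / 2^(k+4)"
proof -
  have "gen (k,b) \<ge> 1 / 2^(k+1) - ee k" using ee_nonneg[of k] by (cases b) (auto simp: gen_def sg_def)
  moreover have "(1::rat) / 2^(k+1) = 8 / 2^(k+4)" by (simp add: field_simps power_add)
  moreover have "(1::rat) / 2^(k+4) = 8 / 2^(k+4) - 7 / 2^(k+4)" by (simp add: field_simps)
  ultimately show ?thesis using ee_less[of k] by linarith
qed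

lemma gen_upper: "gen (k, b) \<le> 9 / 2^(k+4)"
proof -
  have "gen (k,b) \<le> 1 / 2^(k+1) + ee k" using ee_nonneg[of k] by (cases b) (auto simp: gen_def sg_def)
  moreover have "(1::rat) / 2^(k+1) = 8 / 2^(k+4)" by (simp add: field_simps power_add)
  moreover have "(1::rat) / 2^(k+4) = 9 / 2^(k+4) - 8 / 2^(k+4)" by (simp add: field_simps)
  ultimately show ?thesis using ee_less[of k] by linarith
qed

lemma gen_pos: "gen z > 0"
  using gen_lower[of "fst z" "snd z"] by (metis dual_order.strict_trans1 divide_pos_pos prod.collapse zero_less_numeral zero_less_power)

lemma dy_add: "dy a \<Longrightarrow> dy b \<Longrightarrow> dy (a + b)"
proof -
  assume "dy a" "dy b"
  then obtain z1 j1 z2 j2 where a: "a = of_int z1 / 2^j1" and b: "b = of_int z2 / 2^j2" by (auto simp: dy_def)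
  have "a + b = (of_int z1 * 2^j2 + of_int z2 * 2^j1) / (2^j1 * 2^j2)"
    unfolding a b by (rule add_frac_eq) simp_all
  also have "of_int z1 * 2^j2 + of_int z2 * 2^j1 = (of_int (z1 * 2^j2 + z2 * 2^j1) :: rat)"
    by (simp only: of_int_add of_int_mult of_int_power of_int_numeral)
  also have "(2::rat)^j1 * 2^j2 = 2^(j1 + j2)" by (simp only: power_add)
  finally have "a + b = of_int (z1 * 2^j2 + z2 * 2^j1) / 2^(j1 + j2)" .
  thus "dy (a + b)" unfolding dy_def by (intro exI[of _ "z1 * 2^j2 + z2 * 2^j1"] exI[of _ "j1 + j2"]) simp
qed

lemma dy_neg: "dy a \<Longrightarrow> dy (- a)"
  by (auto simp: dy_def) (metis minus_divide_left of_int_minus)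

lemma dy_diff: "dy a \<Longrightarrow> dy b \<Longrightarrow> dy (a - b)"
  using dy_add dy_neg by (metis diff_conv_add_uminus)

lemma dy_int_mult: "dy a \<Longrightarrow> dy (of_int c * a)"
  by (auto simp: dy_def) (metis of_int_mult times_divide_eq_right)

lemma dy_0: "dy 0" by (auto simp: dy_def intro: exI[of _ 0])

lemma ee_cong: "dy (ee k - 1 / 3^k)"
proof -
  define A where "A = (2::nat)^(k+4)"
  define q where "q = A div 3^k"
  define r where "r = A mod 3^k"
  have Aqr: "A = q * 3^k + r" unfolding q_def r_def by (rule div_mult_mod_eq[symmetric])
  have "(of_nat A :: rat) = of_nat (q * 3^k + r)" using Aqr by simp
  hence rel: "(2::rat)^(k+4) = of_nat q * 3^k + of_nat r" unfolding A_def by simp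
  have ee: "ee k = of_nat r / (3^k * 2^(k+4))" unfolding ee_def r_def A_def by simp
  have "ee k - 1 / 3^k = (of_nat r - 2^(k+4)) / (3^k * 2^(k+4))" unfolding ee by (simp add: field_simps)
  also have "(of_nat r - 2^(k+4) :: rat) = - (of_nat q * 3^k)" using rel by simp
  also have "- (of_nat q * 3^k) / (3^k * 2^(k+4)) = (of_int (- int q) / 2^(k+4) :: rat)" by simp
  finally have "ee k - 1 / 3^k = of_int (- int q) / 2^(k+4)" .
  thus ?thesis unfolding dy_def by blast
qed

lemma gen_cong: "dy (gen z - of_int (sg (snd z)) / 3^(fst z))"
proof -
  have "gen z - of_int (sg (snd z)) / 3^(fst z) = of_int 1 / 2^(fst z + 1) + of_int (sg (snd z)) * (ee (fst z) - 1 / 3^(fst z))"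
    unfolding gen_def by (simp add: algebra_simps)
  moreover have "dy (of_int 1 / 2^(fst z + 1))" unfolding dy_def by (intro exI[of _ 1] exI[of _ "fst z + 1"]) simp
  ultimately show ?thesis using dy_add dy_int_mult ee_cong by metis
qed

lemma dy_div3: assumes "dy (of_int I / 3^N)" shows "(3::int)^N dvd I"
proof -
  obtain z j where "of_int I / 3^N = (of_int z / 2^j :: rat)" using assms by (auto simp: dy_def)
  hence "(of_int (I * 2^j) :: rat) = of_int (z * 3^N)" by (simp add: field_simps)
  hence e: "I * 2^j = z * 3^N" by (simp only: of_int_eq_iff)
  have "algebraic_semidom_class.coprime ((3::int)^N) (2^j)" by simp
  moreover have "(3::int)^N dvd I * 2^j" using e by simp
  ultimately show ?thesis by (simp add: coprime_dvd_mult_left_iff)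
qed

lemma grid_mono:
  assumes "s \<in> grid (2^a * 3^b)" "a \<le> a'" "b \<le> b'"
  shows "s \<in> grid (2^a' * 3^b')"
proof -
  obtain n where n: "s = of_nat n / of_nat (2^a * 3^b)" using assms(1) by (auto simp: grid_def)
  have "(2::nat)^a' = 2^a * 2^(a'-a)" "(3::nat)^b' = 3^b * 3^(b'-b)" using assms(2,3) by (simp_all flip: power_add)
  hence "s = of_nat (n * 2^(a'-a) * 3^(b'-b)) / of_nat (2^a' * 3^b')" using n by (simp add: field_simps)
  thus ?thesis unfolding grid_def by blast
qed

lemma common_grid: "finite S \<Longrightarrow> S \<subseteq> Z6 \<Longrightarrow> \<exists>a b. S \<subseteq> grid (2^a * 3^b)"
proof (induction S rule: finite_induct)
  case empty then show ?case by auto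
next
  case (insert s S)
  then obtain a b where ab: "S \<subseteq> grid (2^a * 3^b)" by auto
  obtain n a1 b1 where s: "s = of_nat n / (2^a1 * 3^b1)" using insert.prems by (auto simp: Z6_def)
  have "s \<in> grid (2^a1 * 3^b1)" using s by (auto simp: grid_def)
  hence "s \<in> grid (2^(max a a1) * 3^(max b b1))" by (rule grid_mono) auto
  moreover have "S \<subseteq> grid (2^(max a a1) * 3^(max b b1))" using ab grid_mono by (meson max.cobounded1 subset_iff)
  ultimately show ?case by blast
qed

lemma divisor_dyadic:
  assumes gh: "g * h = T" and g: "Poly_Mapping.keys g \<subseteq> Z6" and h: "Poly_Mapping.keys h \<subseteq> Z6"
  shows "Poly_Mapping.keys g \<subseteq> Dy"
proof -
  obtain a b where ab: "Poly_Mapping.keys g \<union> Poly_Mapping.keys h \<subseteq> grid (2^a * 3^b)"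
    using common_grid[of "Poly_Mapping.keys g \<union> Poly_Mapping.keys h"] g h by auto
  define N where "N = (2::nat)^a * 3^b"
  have N: "N > 0" unfolding N_def by simp
  have "conv N g * conv N h = conv N T"
    using conv_mult[OF N, of g h] ab gh unfolding N_def by auto
  also have "\<dots> = (Phi b)^(2^a)" unfolding conv_T[OF N] by (simp add: Phi_pow2 N_def)
  finally have "conv N g dvd (Phi b)^(2^a)" by (metis dvd_triv_left)
  hence ms: "msupp (3^b) (conv N g)" by (rule dvd_Phi_pow)
  show ?thesis
  proof
    fix s assume s: "s \<in> Poly_Mapping.keys g"
    then obtain n where n: "s = of_nat n / of_nat N" using ab unfolding N_def by (auto simp: grid_def)
    have "coeff (conv N g) n = kb (Poly_Mapping.lookup g s)" using coeff_conv[OF N _ n] ab unfolding N_def by auto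
    also have "\<dots> \<noteq> 0" using s by (simp add: kb_eq_0 in_keys_iff)
    finally have "3^b dvd n" using ms by (auto simp: msupp_def)
    then obtain k where "n = 3^b * k" by blast
    hence "s = of_nat k / 2^a" using n unfolding N_def by (simp add: field_simps)
    thus "s \<in> Dy" by (auto simp: Dy_def)
  qed
qed

definition dd :: "nat \<Rightarrow> (nat \<times> bool) list \<Rightarrow> nat \<Rightarrow> int" where
  "dd n zs i = sum_list (map (\<lambda>z. if fst z = n + i then sg (snd z) else 0) zs)"

lemma dd_Nil[simp]: "dd n [] i = 0" by (simp add: dd_def)
lemma dd_Cons: "dd n (z # zs) i = (if fst z = n + i then sg (snd z) else 0) + dd n zs i"
  by (simp add: dd_def)

lemma Hs_sum: "of_int (Hs d m) / 3^m = (\<Sum>i\<in>{1..m}. (of_int (d i) :: rat) / 3^i)"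
proof (induction m)
  case 0 then show ?case by simp
next
  case (Suc m)
  have "(of_int (Hs d (Suc m)) :: rat) / 3^(Suc m) = of_int (Hs d m) / 3^m + of_int (d (Suc m)) / 3^(Suc m)"
    by (simp add: field_simps)
  also have "\<dots> = (\<Sum>i\<in>{1..Suc m}. (of_int (d i) :: rat) / 3^i)" using Suc.IH by simp
  finally show ?case .
qed

lemma Ws_sum: "Ws d m = (\<Sum>i\<in>{1..m}. (of_int \<bar>d i\<bar> :: rat) / 2^i)"
  by (induction m) simp_all

lemma sg_abs: "\<bar>sg b\<bar> = 1" by (simp add: sg_def)

lemma dd_sum3:
  assumes "\<forall>z\<in>set zs. n < fst z \<and> fst z \<le> n + m"
  shows "(\<Sum>i\<in>{1..m}. (of_int (dd n zs i) :: rat) / 3^i) = sum_list (map (\<lambda>z. of_int (sg (snd z)) / 3^(fst z - n)) zs)"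
  using assms
proof (induction zs)
  case Nil then show ?case by simp
next
  case (Cons z zs)
  have zr: "fst z - n \<in> {1..m}" using Cons.prems by auto
  have "(\<Sum>i\<in>{1..m}. (of_int (dd n (z#zs) i) :: rat) / 3^i)
      = (\<Sum>i\<in>{1..m}. (if i = fst z - n then of_int (sg (snd z)) / 3^i else 0)) + (\<Sum>i\<in>{1..m}. (of_int (dd n zs i) :: rat) / 3^i)"
    unfolding dd_Cons sum.distrib[symmetric]
  proof (rule sum.cong[OF refl])
    fix i assume "i \<in> {1..m}"
    have "(fst z = n + i) = (i = fst z - n)" using Cons.prems by auto
    thus "(of_int ((if fst z = n + i then sg (snd z) else 0) + dd n zs i) :: rat) / 3^i
       = (if i = fst z - n then of_int (sg (snd z)) / 3^i else 0) + of_int (dd n zs i) / 3^i"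
      by (simp add: add_divide_distrib)
  qed
  also have "\<dots> = of_int (sg (snd z)) / 3^(fst z - n) + sum_list (map (\<lambda>z. of_int (sg (snd z)) / 3^(fst z - n)) zs)"
    using zr Cons by (simp add: sum.delta')
  finally show ?case by simp
qed

lemma dd_sum2:
  assumes "\<forall>z\<in>set zs. n < fst z \<and> fst z \<le> n + m"
  shows "(\<Sum>i\<in>{1..m}. (of_int \<bar>dd n zs i\<bar> :: rat) / 2^i) \<le> sum_list (map (\<lambda>z. 1 / 2^(fst z - n)) zs)"
  using assms
proof (induction zs)
  case Nil then show ?case by simp
next
  case (Cons z zs)
  have zr: "fst z - n \<in> {1..m}" using Cons.prems by auto
  have "(\<Sum>i\<in>{1..m}. (of_int \<bar>dd n (z#zs) i\<bar> :: rat) / 2^i)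
      \<le> (\<Sum>i\<in>{1..m}. (if i = fst z - n then 1 / 2^i else 0) + (of_int \<bar>dd n zs i\<bar> :: rat) / 2^i)"
  proof (rule sum_mono)
    fix i assume "i \<in> {1..m}"
    have eq: "(fst z = n + i) = (i = fst z - n)" using Cons.prems by auto
    show "(of_int \<bar>dd n (z#zs) i\<bar> :: rat) / 2^i \<le> (if i = fst z - n then 1 / 2^i else 0) + (of_int \<bar>dd n zs i\<bar> :: rat) / 2^i"
    proof (cases "fst z = n + i")
      case True
      have "\<bar>sg (snd z) + dd n zs i\<bar> \<le> 1 + \<bar>dd n zs i\<bar>"
        using sg_abs[of "snd z"] abs_triangle_ineq[of "sg (snd z)" "dd n zs i"] by linarith
      hence "(of_int \<bar>sg (snd z) + dd n zs i\<bar> :: rat) \<le> 1 + of_int \<bar>dd n zs i\<bar>"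
        by (metis of_int_1 of_int_add of_int_le_iff)
      hence "(of_int \<bar>sg (snd z) + dd n zs i\<bar> :: rat) / 2^i \<le> (1 + of_int \<bar>dd n zs i\<bar>) / 2^i"
        by (simp add: divide_right_mono)
      thus ?thesis using True eq by (simp add: dd_Cons add_divide_distrib)
    next
      case False
      thus ?thesis using eq by (simp add: dd_Cons)
    qed
  qed
  also have "\<dots> = 1 / 2^(fst z - n) + (\<Sum>i\<in>{1..m}. (of_int \<bar>dd n zs i\<bar> :: rat) / 2^i)"
    using zr by (simp add: sum.distrib sum.delta')
  also have "\<dots> \<le> 1 / 2^(fst z - n) + sum_list (map (\<lambda>z. 1 / 2^(fst z - n)) zs)"
    using Cons by simp
  finally show ?case by simp
qed

lemma sum_gen_lower:
  "sum_list (map gen zs) \<ge> (7/16) * sum_list (map (\<lambda>z. 1 / 2^(fst z)) zs)"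
proof (induction zs)
  case Nil then show ?case by simp
next
  case (Cons z zs)
  have "gen z \<ge> 7 / 2^(fst z + 4)" using gen_lower[of "fst z" "snd z"] by simp
  also have "(7::rat) / 2^(fst z + 4) = (7/16) * (1 / 2^(fst z))" by (simp add: power_add)
  finally show ?case using Cons by (simp add: algebra_simps)
qed

lemma sum_list_shift:
  assumes "\<forall>z\<in>set zs. n \<le> fst z"
  shows "sum_list (map (\<lambda>z. (1::rat) / 2^(fst z - n)) zs) = 2^n * sum_list (map (\<lambda>z. 1 / 2^(fst z)) zs)"
  using assms
proof (induction zs)
  case Nil then show ?case by simp
next
  case (Cons z zs)
  have "(2::rat)^(fst z) = 2^(fst z - n) * 2^n" using Cons.prems by (simp flip: power_add)
  hence "(1::rat) / 2^(fst z - n) = 2^n * (1 / 2^(fst z))" by (simp add: field_simps)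
  thus ?case using Cons by (simp add: algebra_simps)
qed

lemma sum_list3_shift:
  assumes "\<forall>z\<in>set zs. n \<le> fst z"
  shows "sum_list (map (\<lambda>z. (of_int (sg (snd z)) :: rat) / 3^(fst z - n)) zs) = 3^n * sum_list (map (\<lambda>z. of_int (sg (snd z)) / 3^(fst z)) zs)"
  using assms
proof (induction zs)
  case Nil then show ?case by simp
next
  case (Cons z zs)
  have "(3::rat)^(fst z) = 3^(fst z - n) * 3^n" using Cons.prems by (simp flip: power_add)
  hence "(of_int (sg (snd z)) :: rat) / 3^(fst z - n) = 3^n * (of_int (sg (snd z)) / 3^(fst z))" by (simp add: field_simps)
  thus ?case using Cons by (simp add: algebra_simps)
qed

lemma dy_sum_gen: "dy (sum_list (map gen zs) - sum_list (map (\<lambda>z. of_int (sg (snd z)) / 3^(fst z)) zs))"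
proof (induction zs)
  case Nil then show ?case by (simp add: dy_0)
next
  case (Cons z zs)
  have e: "sum_list (map gen (z#zs)) - sum_list (map (\<lambda>z. of_int (sg (snd z)) / 3^(fst z)) (z#zs))
     = (gen z - of_int (sg (snd z)) / 3^(fst z)) + (sum_list (map gen zs) - sum_list (map (\<lambda>z. of_int (sg (snd z)) / 3^(fst z)) zs))"
    by simp
  show ?case by (subst e) (rule dy_add[OF gen_cong Cons.IH])
qed

lemma cost_list:
  assumes n: "n \<ge> 1" and lv: "\<forall>z\<in>set zs. n < fst z"
    and cg: "dy (sum_list (map gen zs) - of_int t / 3^n)" and t: "\<not> 3 dvd t"
  shows "sum_list (map gen zs) \<ge> 21 / 2^(n+5)"
proof -
  have t': "\<not> 3^n dvd t"
  proof
    assume "3^n dvd t"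
    moreover have "(3::int) dvd 3^n" using n by (cases n) simp_all
    ultimately have "3 dvd t" by (rule dvd_trans[rotated])
    thus False using t by simp
  qed
  define m where "m = Max (insert (n+1) (fst ` set zs)) - n"
  have "n + 1 \<le> Max (insert (n+1) (fst ` set zs))" by simp
  hence m1: "m \<ge> 1" unfolding m_def by linarith
  have rng: "\<forall>z\<in>set zs. n < fst z \<and> fst z \<le> n + m"
  proof
    fix z assume z: "z \<in> set zs"
    have a: "fst z \<le> Max (insert (n+1) (fst ` set zs))" using z by simp
    have b: "n < fst z" using lv z by auto
    show "n < fst z \<and> fst z \<le> n + m" using a b unfolding m_def by linarith
  qed
  define d where "d = dd n zs"
  define S3 where "S3 = sum_list (map (\<lambda>z. (of_int (sg (snd z)) :: rat) / 3^(fst z)) zs)"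
  have lvle: "\<forall>z\<in>set zs. n \<le> fst z" using lv by auto
  have "of_int (Hs d m) / 3^m = 3^n * S3"
    unfolding Hs_sum d_def dd_sum3[OF rng] S3_def using sum_list3_shift[OF lvle] by simp
  hence S3eq: "S3 = of_int (Hs d m) / 3^(n+m)" by (simp add: field_simps power_add)
  have "dy (S3 - of_int t / 3^n)"
    using dy_diff[OF cg dy_sum_gen[of zs]] unfolding S3_def by (simp add: algebra_simps)
  moreover have "S3 - of_int t / 3^n = of_int (Hs d m - t * 3^m) / 3^(n+m)"
    unfolding S3eq by (simp add: field_simps power_add)
  ultimately have "3^(n+m) dvd Hs d m - t * 3^m" using dy_div3 by metis
  hence W: "Ws d m \<ge> 3/2" using cost_main[OF t' m1] by blast
  have "Ws d m \<le> sum_list (map (\<lambda>z. 1 / 2^(fst z - n)) zs)"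
    unfolding Ws_sum d_def by (rule dd_sum2[OF rng])
  also have "\<dots> = 2^n * sum_list (map (\<lambda>z. 1 / 2^(fst z)) zs)" by (rule sum_list_shift[OF lvle])
  finally have "sum_list (map (\<lambda>z. (1::rat) / 2^(fst z)) zs) \<ge> (3/2) / 2^n" using W by (simp add: field_simps)
  hence "(7/16) * sum_list (map (\<lambda>z. (1::rat) / 2^(fst z)) zs) \<ge> (7/16) * ((3/2) / 2^n)" by simp
  moreover have "(7/16) * ((3/2) / 2^n) = (21::rat) / 2^(n+5)" by (simp add: power_add)
  ultimately show ?thesis using sum_gen_lower[of zs] by linarith
qed

definition Mon :: "rat set" where
  "Mon = {sum_list (map gen zs) | zs. \<forall>z\<in>set zs. 1 \<le> fst z}"

lemma two_pow5: "(2::rat)^(n+5) = 2 * 2^(n+4)"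
proof -
  have "n + 5 = Suc (n + 4)" by simp
  thus ?thesis by (simp only: power_Suc)
qed

lemma Mon_0: "0 \<in> Mon" unfolding Mon_def by (rule CollectI, rule exI[of _ "[]"]) simp

lemma Mon_add: "x \<in> Mon \<Longrightarrow> y \<in> Mon \<Longrightarrow> x + y \<in> Mon"
proof -
  assume "x \<in> Mon" "y \<in> Mon"
  then obtain xs ys where "x = sum_list (map gen xs)" "\<forall>z\<in>set xs. 1 \<le> fst z"
    "y = sum_list (map gen ys)" "\<forall>z\<in>set ys. 1 \<le> fst z" by (auto simp: Mon_def)
  thus "x + y \<in> Mon" unfolding Mon_def by (intro CollectI exI[of _ "xs @ ys"]) auto
qed

lemma Mon_gen: "1 \<le> k \<Longrightarrow> gen (k, b) \<in> Mon"
  unfolding Mon_def by (intro CollectI exI[of _ "[(k,b)]"]) auto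

lemma sum_gen_nonneg: "sum_list (map gen zs) \<ge> 0"
  by (induction zs) (auto intro: add_nonneg_nonneg less_imp_le[OF gen_pos])

lemma Mon_nonneg: "x \<in> Mon \<Longrightarrow> x \<ge> 0"
  unfolding Mon_def using sum_gen_nonneg by auto

lemma sum_gen_pos: "zs \<noteq> [] \<Longrightarrow> sum_list (map gen zs) > 0"
proof (induction zs)
  case Nil then show ?case by simp
next
  case (Cons z zs)
  thus ?case using gen_pos[of z] sum_gen_nonneg[of zs] by simp
qed

lemma sum_gen_ge_mem: "z \<in> set zs \<Longrightarrow> sum_list (map gen zs) \<ge> gen z"
proof -
  assume z: "z \<in> set zs"
  have "sum_list (map gen zs) = gen z + sum_list (map gen (remove1 z zs))"
    using z by (metis sum_list_map_remove1)
  thus ?thesis using sum_gen_nonneg[of "remove1 z zs"] by simp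
qed

lemma lemA:
  assumes n: "n \<ge> 1" and lv: "\<forall>z\<in>set zs. 1 \<le> fst z" and len: "length zs \<ge> 2"
  shows "sum_list (map gen zs) \<noteq> gen (n, b0)"
proof
  assume eq: "sum_list (map gen zs) = gen (n, b0)"
  have gup: "gen (n, b0) \<le> 9 / 2^(n+4)" by (rule gen_upper)
  show False
  proof (cases "\<exists>z\<in>set zs. fst z < n")
    case True
    then obtain z where z: "z \<in> set zs" "fst z < n" by blast
    have "gen z \<ge> 7 / 2^(fst z + 4)" using gen_lower[of "fst z" "snd z"] by simp
    moreover have "(7::rat) / 2^(fst z + 4) \<ge> 14 / 2^(n+4)"
    proof -
      have "fst z + 5 \<le> n + 4" using z(2) by simp
      hence "(2::rat)^(fst z + 5) \<le> 2^(n+4)" using power_increasing[of "fst z + 5" "n+4" "2::rat"] by simp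
      moreover have "(2::rat)^(fst z + 5) = 2 * 2^(fst z + 4)" by (simp add: power_add)
      ultimately have "(2::rat)^(n+4) \<ge> 2 * 2^(fst z + 4)" by linarith
      thus ?thesis by (simp add: field_simps)
    qed
    moreover have "(14::rat) / 2^(n+4) > 9 / 2^(n+4)" by (simp add: divide_strict_right_mono)
    ultimately show False using sum_gen_ge_mem[OF z(1)] eq gup by linarith
  next
    case False
    hence ge: "\<forall>z\<in>set zs. n \<le> fst z" by auto
    show False
    proof (cases "\<exists>z\<in>set zs. fst z = n")
      case True
      then obtain z where z: "z \<in> set zs" "fst z = n" by blast
      define rest where "rest = remove1 z zs"
      have sr: "sum_list (map gen zs) = gen z + sum_list (map gen rest)"
        unfolding rest_def using z(1) by (metis sum_list_map_remove1)
      have "length rest \<ge> 1" unfolding rest_def using len z(1) by (simp add: length_remove1)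
      hence rne: "rest \<noteq> []" by auto
      have rpos: "sum_list (map gen rest) > 0" by (rule sum_gen_pos[OF rne])
      have rset: "set rest \<subseteq> set zs" unfolding rest_def by (rule set_remove1_subset)
      show False
      proof (cases "snd z = b0")
        case True
        hence "gen z = gen (n, b0)" using z(2) by (cases z) simp
        thus False using sr eq rpos by simp
      next
        case False
        have "gen (n, b0) - gen z = of_int (sg b0 - sg (snd z)) * ee n"
          using z(2) unfolding gen_def by (simp add: algebra_simps)
        hence rs: "sum_list (map gen rest) = of_int (sg b0 - sg (snd z)) * ee n" using sr eq by simp
        have b0: "b0" and sz: "\<not> snd z"
        proof -
          show "b0"
          proof (rule ccontr)
            assume "\<not> b0"
            hence "sg b0 - sg (snd z) = -2" using False by (simp add: sg_def)
            thus False using rs rpos ee_nonneg[of n] by simp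
          qed
          thus "\<not> snd z" using False by simp
        qed
        hence rs2: "sum_list (map gen rest) = 2 * ee n" using rs by (simp add: sg_def)
        have small: "2 * ee n < 2 / 2^(n+4)" using ee_less[of n] by simp
        show False
        proof (cases "\<exists>w\<in>set rest. fst w = n")
          case True
          then obtain w where w: "w \<in> set rest" "fst w = n" by blast
          have "gen w \<ge> 7 / 2^(n+4)" using gen_lower[of "fst w" "snd w"] w(2) by (cases w) simp
          moreover have "(7::rat) / 2^(n+4) > 2 / 2^(n+4)" by (simp add: divide_strict_right_mono)
          ultimately show False using sum_gen_ge_mem[OF w(1)] rs2 small by linarith
        next
          case False
          hence lvr: "\<forall>w\<in>set rest. n < fst w" using ge rset by force
          have "dy (sum_list (map gen rest) - of_int 2 / 3^n)"
            using rs2 dy_int_mult[OF ee_cong, of 2 n] by (simp add: algebra_simps)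
          hence "sum_list (map gen rest) \<ge> 21 / 2^(n+5)" using cost_list[OF n lvr, of 2] by simp
          moreover have "(21::rat) / 2^(n+5) > 2 / 2^(n+4)" unfolding two_pow5 by (simp add: field_simps)
          ultimately show False using rs2 small by linarith
        qed
      qed
    next
      case False
      hence lvz: "\<forall>z\<in>set zs. n < fst z" using ge by force
      have "dy (gen (n, b0) - of_int (sg b0) / 3^n)" using gen_cong[of "(n, b0)"] by simp
      hence "dy (sum_list (map gen zs) - of_int (sg b0) / 3^n)" using eq by simp
      moreover have "\<not> 3 dvd sg b0" by (simp add: sg_def)
      ultimately have "sum_list (map gen zs) \<ge> 21 / 2^(n+5)" using cost_list[OF n lvz] by blast
      moreover have "(21::rat) / 2^(n+5) > 9 / 2^(n+4)" unfolding two_pow5 by (simp add: field_simps)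
      ultimately show False using eq gup by linarith
    qed
  qed
qed

lemma atom_gen: assumes "1 \<le> n" shows "monoid_atom Mon (gen (n, b0))"
  unfolding monoid_atom_def
proof (intro conjI ballI impI)
  show "gen (n, b0) \<in> Mon" by (rule Mon_gen[OF assms])
  show "gen (n, b0) \<noteq> 0" using gen_pos[of "(n,b0)"] by simp
  fix x y assume x: "x \<in> Mon" and y: "y \<in> Mon" and e: "gen (n, b0) = x + y"
  show "x = 0 \<or> y = 0"
  proof (rule ccontr)
    assume "\<not> (x = 0 \<or> y = 0)"
    hence nz: "x \<noteq> 0" "y \<noteq> 0" by auto
    obtain xs where xs: "x = sum_list (map gen xs)" "\<forall>z\<in>set xs. 1 \<le> fst z" using x by (auto simp: Mon_def)
    obtain ys where ys: "y = sum_list (map gen ys)" "\<forall>z\<in>set ys. 1 \<le> fst z" using y by (auto simp: Mon_def)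
    have "xs \<noteq> []" "ys \<noteq> []" using nz xs ys by auto
    hence "length (xs @ ys) \<ge> 2" by (cases xs; cases ys) auto
    moreover have "\<forall>z\<in>set (xs @ ys). 1 \<le> fst z" using xs ys by auto
    ultimately have "sum_list (map gen (xs @ ys)) \<noteq> gen (n, b0)" using lemA[OF assms] by blast
    thus False using e xs ys by simp
  qed
qed

lemma puiseux_Mon: "puiseux_monoid Mon"
  unfolding puiseux_monoid_def using Mon_0 Mon_add Mon_nonneg by auto

lemma atomic_Mon: "atomic_monoid Mon"
  unfolding atomic_monoid_def
proof (intro ballI impI)
  fix b assume b: "b \<in> Mon" "b \<noteq> 0"
  then obtain zs where zs: "b = sum_list (map gen zs)" "\<forall>z\<in>set zs. 1 \<le> fst z" by (auto simp: Mon_def)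
  show "\<exists>as. as \<noteq> [] \<and> (\<forall>a\<in>set as. monoid_atom Mon a) \<and> sum_list as = b"
  proof (intro exI conjI)
    show "map gen zs \<noteq> []" using zs b by auto
    show "\<forall>a\<in>set (map gen zs). monoid_atom Mon a" using zs atom_gen by (metis imageE list.set_map prod.collapse)
    show "sum_list (map gen zs) = b" using zs by simp
  qed
qed

lemma Dy_Mon: "Dy \<subseteq> Mon"
proof
  fix s assume "s \<in> Dy"
  then obtain n a where s: "s = of_nat n / 2^a" by (auto simp: Dy_def)
  have half: "gen (a+1, True) + gen (a+1, False) = 1 / 2^(a+1)" by (simp add: gen_def sg_def)
  have u: "(1::rat) / 2^(a+1) \<in> Mon" using Mon_add[OF Mon_gen Mon_gen, of "a+1" "a+1" True False] half by simp
  have "of_nat k / 2^(a+1) \<in> Mon" for k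
  proof (induction k)
    case 0 then show ?case by (simp add: Mon_0)
    case (Suc k) then show ?case using Mon_add[OF Suc u] by (simp add: add_divide_distrib add.commute)
  qed
  moreover have "s = of_nat (2 * n) / 2^(a+1)" using s by simp
  ultimately show "s \<in> Mon" by metis
qed

lemma Z6_up:
  assumes "(s::rat) = of_nat n / (2^a * 3^b)" "a \<le> a'" "b \<le> b'"
  shows "s = of_nat (n * 2^(a'-a) * 3^(b'-b)) / (2^a' * 3^b')"
proof -
  have "(2::rat)^a' = 2^a * 2^(a'-a)" "(3::rat)^b' = 3^b * 3^(b'-b)" using assms(2,3) by (simp_all flip: power_add)
  thus ?thesis using assms(1) by (simp add: field_simps)
qed

lemma Z6_add: "x \<in> Z6 \<Longrightarrow> y \<in> Z6 \<Longrightarrow> x + y \<in> Z6"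
proof -
  assume "x \<in> Z6" "y \<in> Z6"
  then obtain n1 a1 b1 n2 a2 b2 where x: "x = of_nat n1 / (2^a1 * 3^b1)" and y: "y = of_nat n2 / (2^a2 * 3^b2)"
    by (auto simp: Z6_def)
  define A where "A = max a1 a2"
  define B where "B = max b1 b2"
  have "x = of_nat (n1 * 2^(A-a1) * 3^(B-b1)) / (2^A * 3^B)" by (rule Z6_up[OF x]) (auto simp: A_def B_def)
  moreover have "y = of_nat (n2 * 2^(A-a2) * 3^(B-b2)) / (2^A * 3^B)" by (rule Z6_up[OF y]) (auto simp: A_def B_def)
  ultimately have "x + y = of_nat (n1 * 2^(A-a1) * 3^(B-b1) + n2 * 2^(A-a2) * 3^(B-b2)) / (2^A * 3^B)"
    by (simp add: add_divide_distrib)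
  thus "x + y \<in> Z6" unfolding Z6_def by blast
qed

lemma gen_Z6: "gen z \<in> Z6"
proof -
  obtain k b where z: "z = (k, b)" by (cases z)
  define r where "r = 2^(k+4) mod (3::nat)^k"
  have r: "r < 3^k" unfolding r_def by simp
  have ee: "ee k = of_nat r / (2^(k+4) * 3^k)" unfolding ee_def r_def by (simp add: mult.commute)
  have h: "(1::rat) / 2^(k+1) = of_nat (8 * 3^k) / (2^(k+4) * 3^k)" by (simp add: power_add)
  show ?thesis
  proof (cases b)
    case True
    hence "gen z = of_nat (8 * 3^k + r) / (2^(k+4) * 3^k)"
      unfolding z gen_def sg_def using ee h by (simp add: add_divide_distrib)
    thus ?thesis unfolding Z6_def by blast
  next
    case False
    have "r \<le> 8 * 3^k" using r by simp
    hence "(of_nat (8 * 3^k - r) :: rat) = of_nat (8 * 3^k) - of_nat r" by (simp add: of_nat_diff)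
    hence "gen z = of_nat (8 * 3^k - r) / (2^(k+4) * 3^k)"
      unfolding z gen_def sg_def using ee h False by (simp add: diff_divide_distrib)
    thus ?thesis unfolding Z6_def by blast
  qed
qed

lemma Mon_Z6: "Mon \<subseteq> Z6"
proof
  fix x assume "x \<in> Mon"
  then obtain zs where x: "x = sum_list (map gen zs)" by (auto simp: Mon_def)
  have "sum_list (map gen zs) \<in> Z6"
  proof (induction zs)
    case Nil
    have "(0::rat) = of_nat 0 / (2^0 * 3^0)" by simp
    thus ?case unfolding Z6_def by (simp only: list.map sum_list.Nil) blast
  next
    case (Cons z zs) thus ?case using Z6_add gen_Z6 by simp
  qed
  thus "x \<in> Z6" using x by simp
qed

lemma alg_mult: "f \<in> monoid_algebra Mon \<Longrightarrow> g \<in> monoid_algebra Mon \<Longrightarrow> f * g \<in> monoid_algebra Mon"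
  unfolding monoid_algebra_def using keys_mult[of f g] Mon_add by blast

lemma alg_one: "(1::rat \<Rightarrow>\<^sub>0 bit) \<in> monoid_algebra Mon"
  unfolding monoid_algebra_def using Mon_0 by simp

lemma alg_prod: "\<forall>g\<in>set fs. g \<in> monoid_algebra Mon \<Longrightarrow> prod_list fs \<in> monoid_algebra Mon"
  by (induction fs) (auto simp: alg_one alg_mult)

lemma one_Dy: "(1::rat) \<in> Dy" unfolding Dy_def by (rule CollectI, rule exI[of _ 1], rule exI[of _ 0]) simp
lemma two_Dy: "(2::rat) \<in> Dy" unfolding Dy_def by (rule CollectI, rule exI[of _ 2], rule exI[of _ 0]) simp

lemma keys_T: "Poly_Mapping.keys T \<subseteq> {0, 1, 2}"
  unfolding T_def using keys_add by (fastforce dest!: subsetD[OF keys_add])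

lemma T_alg: "T \<in> monoid_algebra Mon"
  unfolding monoid_algebra_def using keys_T Mon_0 Dy_Mon one_Dy two_Dy by blast

lemma T_nonzero: "T \<noteq> 0"
proof -
  have "Poly_Mapping.lookup T 0 = 1" unfolding T_def by (simp add: lookup_add lookup_single)
  thus ?thesis by auto
qed

lemma T_not_unit: "\<not> ma_unit Mon T"
proof
  assume "ma_unit Mon T"
  then obtain k where k: "k \<in> monoid_algebra Mon" "T * k = 1" by (auto simp: ma_unit_def)
  have fin: "finite (Poly_Mapping.keys k \<union> Poly_Mapping.keys T)" by simp
  have "Poly_Mapping.keys k \<union> Poly_Mapping.keys T \<subseteq> Z6"
    using k(1) T_alg Mon_Z6 unfolding monoid_algebra_def by blast
  then obtain a b where ab: "Poly_Mapping.keys k \<union> Poly_Mapping.keys T \<subseteq> grid (2^a * 3^b)"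
    using common_grid[OF fin] by blast
  define N where "N = (2::nat)^a * 3^b"
  have N: "N > 0" unfolding N_def by simp
  have "conv N T * conv N k = conv N 1" using conv_mult[OF N, of T k] ab k(2) unfolding N_def by auto
  hence "conv N T * conv N k = 1" by (simp add: conv_one)
  hence u: "is_unit (conv N T)" by (metis dvd_triv_left)
  have "conv N T = (Phi b)^(2^a)" unfolding conv_T[OF N] by (simp add: Phi_pow2 N_def)
  moreover have "Phi b dvd (Phi b)^(2^a)" by (rule dvd_power) simp_all
  ultimately have "is_unit (Phi b)" using u by (metis dvd_trans)
  thus False using irr_Phi[of b] by (simp add: irreducible_def)
qed

lemma char2_sq: "((x::rat \<Rightarrow>\<^sub>0 bit) + y) * (x + y) = x * x + y * y"
proof -
  have two: "(2::rat \<Rightarrow>\<^sub>0 bit) = 0"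
    by (metis bit_numeral_even numeral_One single_numeral single_zero)
  have "(x + y) * (x + y) = x * x + y * y + 2 * (x * y)" by (simp add: algebra_simps mult_2)
  thus ?thesis using two by simp
qed

lemma sq_sum: "finite A \<Longrightarrow> (\<Sum>s\<in>A. (F s :: rat \<Rightarrow>\<^sub>0 bit)) * (\<Sum>s\<in>A. F s) = (\<Sum>s\<in>A. F s * F s)"
  by (induction A rule: finite_induct) (simp_all add: char2_sq)

definition halve :: "(rat \<Rightarrow>\<^sub>0 bit) \<Rightarrow> (rat \<Rightarrow>\<^sub>0 bit)" where
  "halve g = Poly_Mapping.map_key (\<lambda>s. 2 * s) g"

lemma inj_dbl: "inj (\<lambda>s::rat. 2 * s)" by (rule injI) simp

lemma lookup_halve: "Poly_Mapping.lookup (halve g) s = Poly_Mapping.lookup g (2 * s)"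
  unfolding halve_def using inj_dbl by (simp add: map_key.rep_eq)

lemma keys_halve: "Poly_Mapping.keys (halve g) = {s. 2 * s \<in> Poly_Mapping.keys g}"
  by (auto simp: in_keys_iff lookup_halve)

lemma halve_sq: "halve g * halve g = g"
proof -
  let ?h = "halve g"
  have "?h * ?h = (\<Sum>s\<in>Poly_Mapping.keys ?h. Poly_Mapping.single s (Poly_Mapping.lookup ?h s) * Poly_Mapping.single s (Poly_Mapping.lookup ?h s))"
    using sq_sum[of "Poly_Mapping.keys ?h" "\<lambda>s. Poly_Mapping.single s (Poly_Mapping.lookup ?h s)"] pm_expand[of ?h] by simp
  also have "\<dots> = (\<Sum>s\<in>Poly_Mapping.keys ?h. Poly_Mapping.single (2 * s) (Poly_Mapping.lookup g (2 * s)))"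
  proof (rule sum.cong[OF refl])
    fix s
    have "Poly_Mapping.lookup g (2*s) * Poly_Mapping.lookup g (2*s) = Poly_Mapping.lookup g (2*s)"
      using bit_cases2[of "Poly_Mapping.lookup g (2*s)"] by auto
    hence cc: "Poly_Mapping.lookup ?h s * Poly_Mapping.lookup ?h s = Poly_Mapping.lookup g (2*s)"
      by (simp only: lookup_halve)
    have "Poly_Mapping.single s (Poly_Mapping.lookup ?h s) * Poly_Mapping.single s (Poly_Mapping.lookup ?h s)
        = Poly_Mapping.single (s + s) (Poly_Mapping.lookup ?h s * Poly_Mapping.lookup ?h s)" by (rule mult_single)
    also have "s + s = 2 * s" by simp
    finally show "Poly_Mapping.single s (Poly_Mapping.lookup ?h s) * Poly_Mapping.single s (Poly_Mapping.lookup ?h s) = Poly_Mapping.single (2 * s) (Poly_Mapping.lookup g (2 * s))"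
      by (simp only: cc)
  qed
  also have "\<dots> = (\<Sum>t\<in>(\<lambda>s. 2 * s) ` Poly_Mapping.keys ?h. Poly_Mapping.single t (Poly_Mapping.lookup g t))"
    by (rule sum.reindex[symmetric, unfolded comp_def]) (simp add: inj_on_def)
  also have "(\<lambda>s. 2 * s) ` Poly_Mapping.keys ?h = Poly_Mapping.keys g"
  proof -
    have "t \<in> (\<lambda>s. 2 * s) ` Poly_Mapping.keys ?h" if "t \<in> Poly_Mapping.keys g" for t
      using that keys_halve by (intro image_eqI[of _ _ "t / 2"]) auto
    thus ?thesis using keys_halve by auto
  qed
  also have "(\<Sum>t\<in>Poly_Mapping.keys g. Poly_Mapping.single t (Poly_Mapping.lookup g t)) = g"
    by (rule pm_expand[symmetric])
  finally show ?thesis .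
qed

lemma halve_alg: "Poly_Mapping.keys g \<subseteq> Dy \<Longrightarrow> halve g \<in> monoid_algebra Mon"
proof -
  assume g: "Poly_Mapping.keys g \<subseteq> Dy"
  have "Poly_Mapping.keys (halve g) \<subseteq> Dy"
  proof
    fix s assume "s \<in> Poly_Mapping.keys (halve g)"
    hence "2 * s \<in> Dy" using g keys_halve by auto
    then obtain n a where "2 * s = of_nat n / 2^a" by (auto simp: Dy_def)
    hence "s = of_nat n / 2^(a+1)" by (simp add: field_simps)
    thus "s \<in> Dy" unfolding Dy_def by blast
  qed
  thus ?thesis using Dy_Mon by (auto simp: monoid_algebra_def)
qed

theorem theorem5p4:
  shows "\<exists>M. puiseux_monoid M \<and> atomic_monoid M \<and> \<not> ma_atomic M"
proof (intro exI conjI)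
  show "puiseux_monoid Mon" by (rule puiseux_Mon)
  show "atomic_monoid Mon" by (rule atomic_Mon)
  show "\<not> ma_atomic Mon"
  proof
    assume "ma_atomic Mon"
    then obtain fs where fs: "fs \<noteq> []" "\<forall>g\<in>set fs. ma_irreducible Mon g" "prod_list fs = T"
      using T_alg T_nonzero T_not_unit unfolding ma_atomic_def by blast
    then obtain g rest where gr: "fs = g # rest" by (cases fs) auto
    have girr: "ma_irreducible Mon g" using fs(2) gr by simp
    have galg: "g \<in> monoid_algebra Mon" using girr by (simp add: ma_irreducible_def)
    have ralg: "prod_list rest \<in> monoid_algebra Mon"
      using fs(2) gr by (intro alg_prod) (auto simp: ma_irreducible_def)
    have prod: "g * prod_list rest = T" using fs(3) gr by simp
    have "Poly_Mapping.keys g \<subseteq> Dy"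
      using divisor_dyadic[OF prod] galg ralg Mon_Z6 unfolding monoid_algebra_def by blast
    hence halg: "halve g \<in> monoid_algebra Mon" by (rule halve_alg)
    have "ma_unit Mon (halve g)"
      using girr halg halve_sq[of g] unfolding ma_irreducible_def by metis
    then obtain k where k: "k \<in> monoid_algebra Mon" "halve g * k = 1" by (auto simp: ma_unit_def)
    have "g * (k * k) = (halve g * k) * (halve g * k)" using halve_sq[of g] by (simp add: algebra_simps)
    hence "g * (k * k) = 1" using k(2) by simp
    hence "ma_unit Mon g" using galg alg_mult[OF k(1) k(1)] unfolding ma_unit_def by blast
    thus False using girr by (simp add: ma_irreducible_def)
  qed
qed

end
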